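(* Let $K$ be a field, $S=K[x_1,\ldots,x_n]$, $I\subset S$ a monomial ideal with $I\ne S$ and $G(I)=\{x^{a_1},\ldots,x^{a_m}\}$. Let $T$, $T_l$ be as in the context. For $l=1,\ldots,n$ and $j=1,\ldots,m$ let $L_{l,a_j(l)}$ be a monomial ideal of $T_l$ such that $L_{l,a_j(l)}\subset L_{l,a_k(l)}$ whenever $a_j(l)\ge a_k(l)$, and put $L_j=\prod_{l=1}^nL_{l,a_j(l)}\subset T$. Let $\mathbb{F}^*$ be the complex of $L_1,\ldots,L_m$ induced by $I$. Then $\mathbb{F}^*$ is acyclic (i.e. $H_i(\mathbb{F}^* )=0$ for $i>0$) and $H_0(\mathbb{F}^* )=T/L$, where $L=\sum_{j=1}^mL_j$.
   Context: For $a\in\mathbb{N}^n$, $x^a=x_1^{a(1)}\cdots x_n^{a(n)}$; $G(I)$ is the minimal monomial generating set. $T$ is the polynomial ring over $K$ in variables $x_{l1},\ldots,x_{lm_l}$ ($l=1,\ldots,n$) and $T_l=K[x_{l1},\ldots,x_{lm_l}]$. Let $0\to F_p\to\cdots\to F_1\to F_0\to S/I\to 0$ be the $\mathbb{Z}^n$-graded minimal free resolution of $S/I$ with differential $\partial$, where $F_0=S$ with basis $f_{01}$ of degree $0$, and $F_i=\bigoplus_{j=1}^{\beta_i}Sf_{ij}$ with $f_{ij}$ homogeneous of multidegree $a_{ij}\in\mathbb{N}^n$; here $\beta_1=m$, $a_{1j}=a_j$ and $\partial(f_{1j})=x^{a_j}f_{01}$. Write $\partial(f_{ij})=\sum_k\lambda^{(i)}_{kj}x^{a_{ij}-a_{i-1,k}}f_{i-1,k}$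 with $\lambda^{(i)}_{kj}\in K$, where $\lambda^{(i)}_{kj}=0$ whenever $a_{ij}-a_{i-1,k}\notin\mathbb{N}^n$; the matrices $\lambda^{(i)}=(\lambda^{(i)}_{kj})\in K^{\beta_{i-1}\times\beta_i}$ are the scalar matrices ($\lambda^{(1)}=(1,\ldots,1)$). Given monomial ideals $L_1,\ldots,L_m$ of $T$, the complex $\mathbb{F}^*$ of $L_1,\ldots,L_m$ induced by $I$ is defined by $F^*_0=T$, $F^*_i=\bigoplus_{j=1}^{\beta_i}L_{ij}$ for $1\le i\le p$, where $L_{1j}=L_j$ and, for $i\ge2$, $L_{ij}=\bigcap_{k:\lambda^{(i)}_{kj}\neq0}L_{i-1,k}$; the differential $\partial^*:F^*_i\to F^*_{i-1}$ maps a column vector $u=(u_1,\ldots,u_{\beta_i})^T$, $u_j\in L_{ij}$, to $\lambda^{(i)}u$. *)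

theory Defs
  imports "HOL-Library.Poly_Mapping"
begin

type_synonym ('v, 'k) mpoly = "('v \<Rightarrow>\<^sub>0 nat) \<Rightarrow>\<^sub>0 'k"

definition monom :: "('v \<Rightarrow>\<^sub>0 nat) \<Rightarrow> ('v, 'k::zero_neq_one) mpoly" where
  "monom a = Poly_Mapping.single a 1"

definition const :: "'k::zero \<Rightarrow> ('v, 'k) mpoly" where
  "const c = Poly_Mapping.single 0 c"

(* componentwise order on exponent vectors: x^a divides x^b *)
definition mle :: "('v \<Rightarrow>\<^sub>0 nat) \<Rightarrow> ('v \<Rightarrow>\<^sub>0 nat) \<Rightarrow> bool" where
  "mle a b \<longleftrightarrow> (\<forall>l. Poly_Mapping.lookup a l \<le> Poly_Mapping.lookup b l)"

definition subring_vars :: "'v set \<Rightarrow> ('v, 'k::zero) mpoly set" where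
  "subring_vars V = {f. \<forall>a \<in> Poly_Mapping.keys f. Poly_Mapping.keys a \<subseteq> V}"

definition is_ideal_in :: "'a::comm_ring_1 set \<Rightarrow> 'a set \<Rightarrow> bool" where
  "is_ideal_in R J \<longleftrightarrow> J \<subseteq> R \<and> 0 \<in> J \<and> (\<forall>x\<in>J. \<forall>y\<in>J. x + y \<in> J)
      \<and> (\<forall>r\<in>R. \<forall>x\<in>J. r * x \<in> J)"

definition ideal_gen :: "'a::comm_ring_1 set \<Rightarrow> 'a set \<Rightarrow> 'a set" where
  "ideal_gen R G = \<Inter>{J. is_ideal_in R J \<and> G \<subseteq> J}"

definition monomial_ideal_in :: "'v set \<Rightarrow> ('v, 'k::comm_ring_1) mpoly set \<Rightarrow> bool" where
  "monomial_ideal_in V J \<longleftrightarrow> is_ideal_in (subring_vars V) J \<and>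
     (\<exists>M. (\<forall>a\<in>M. Poly_Mapping.keys a \<subseteq> V) \<and> J = ideal_gen (subring_vars V) (monom ` M))"

(* exponents of the minimal monomial generating set G(I) of a monomial ideal I *)
definition mingens :: "('v, 'k::comm_ring_1) mpoly set \<Rightarrow> ('v \<Rightarrow>\<^sub>0 nat) set" where
  "mingens I = {a. monom a \<in> I \<and> (\<forall>b. monom b \<in> I \<and> mle b a \<longrightarrow> b = a)}"

(* free module of rank b: vectors indexed by j < b *)
definition freemod :: "nat \<Rightarrow> (nat \<Rightarrow> 'a::zero) set" where
  "freemod b = {u. \<forall>j\<ge>b. u j = 0}"

(* differential \<partial>_i of the Z^n-graded free complex with basis degrees a i j and
   scalar matrices lam i k j:  \<partial>(f_ij) = \<Sum>_k lam i k j x^(a_ij - a_(i-1)k) f_(i-1)k *)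
definition dres :: "(nat \<Rightarrow> nat) \<Rightarrow> (nat \<Rightarrow> nat \<Rightarrow> ('v \<Rightarrow>\<^sub>0 nat)) \<Rightarrow> (nat \<Rightarrow> nat \<Rightarrow> nat \<Rightarrow> 'k::comm_ring_1)
     \<Rightarrow> nat \<Rightarrow> (nat \<Rightarrow> ('v, 'k) mpoly) \<Rightarrow> (nat \<Rightarrow> ('v, 'k) mpoly)" where
  "dres \<beta> a lam i u = (\<lambda>k. if k < \<beta> (i - 1)
      then (\<Sum>j<\<beta> i. const (lam i k j) * monom (a i j - a (i - 1) k) * u j) else 0)"

(* (p, \<beta>, a, lam) describe the Z^n-graded minimal free resolution
   0 \<rightarrow> F_p \<rightarrow> ... \<rightarrow> F_1 \<rightarrow> F_0 = S \<rightarrow> S/I \<rightarrow> 0 of S/I, with F_i = S^(\<beta> i) *)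
definition is_min_graded_res ::
  "('v, 'k::field) mpoly set \<Rightarrow> nat \<Rightarrow> (nat \<Rightarrow> nat) \<Rightarrow> (nat \<Rightarrow> nat \<Rightarrow> ('v \<Rightarrow>\<^sub>0 nat))
     \<Rightarrow> (nat \<Rightarrow> nat \<Rightarrow> nat \<Rightarrow> 'k) \<Rightarrow> bool" where
  "is_min_graded_res I p \<beta> a lam \<longleftrightarrow>
     \<beta> 0 = 1 \<and> a 0 0 = 0 \<and> (\<forall>i>p. \<beta> i = 0) \<and>
     (\<forall>i k j. 1 \<le> i \<and> j < \<beta> i \<and> k < \<beta> (i - 1) \<and> lam i k j \<noteq> 0 \<longrightarrow>
         mle (a (i - 1) k) (a i j) \<and> a (i - 1) k \<noteq> a i j) \<and>
     dres \<beta> a lam 1 ` freemod (\<beta> 1) = {u. u 0 \<in> I \<and> (\<forall>k\<ge>1. u k = 0)} \<and>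
     (\<forall>i. 1 \<le> i \<and> i \<le> p \<longrightarrow>
        {u \<in> freemod (\<beta> i). dres \<beta> a lam i u = (\<lambda>_. 0)} = dres \<beta> a lam (Suc i) ` freemod (\<beta> (Suc i)))"

fun Lind :: "(nat \<Rightarrow> nat) \<Rightarrow> (nat \<Rightarrow> nat \<Rightarrow> nat \<Rightarrow> 'k::zero) \<Rightarrow> (nat \<Rightarrow> 'a set) \<Rightarrow> nat \<Rightarrow> nat \<Rightarrow> 'a set" where
  "Lind \<beta> lam L 0 j = UNIV"
| "Lind \<beta> lam L (Suc 0) j = L j"
| "Lind \<beta> lam L (Suc (Suc i)) j =
     \<Inter>{Lind \<beta> lam L (Suc i) k | k. k < \<beta> (Suc i) \<and> lam (Suc (Suc i)) k j \<noteq> 0}"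

(* the module F*_i = \<Oplus>_j L_ij, as column vectors *)
definition Fstar :: "(nat \<Rightarrow> nat) \<Rightarrow> (nat \<Rightarrow> nat \<Rightarrow> nat \<Rightarrow> 'k::zero) \<Rightarrow> (nat \<Rightarrow> 'a::zero set) \<Rightarrow> nat
     \<Rightarrow> (nat \<Rightarrow> 'a) set" where
  "Fstar \<beta> lam L i = {u. (\<forall>j<\<beta> i. u j \<in> Lind \<beta> lam L i j) \<and> (\<forall>j\<ge>\<beta> i. u j = 0)}"

definition dstar :: "(nat \<Rightarrow> nat) \<Rightarrow> (nat \<Rightarrow> nat \<Rightarrow> nat \<Rightarrow> 'k::comm_ring_1) \<Rightarrow> nat
     \<Rightarrow> (nat \<Rightarrow> ('w, 'k) mpoly) \<Rightarrow> (nat \<Rightarrow> ('w, 'k) mpoly)" where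
  "dstar \<beta> lam i u = (\<lambda>k. if k < \<beta> (i - 1) then (\<Sum>j<\<beta> i. const (lam i k j) * u j) else 0)"

end

theory Submission
  imports Defs
begin


lemma lookup_const_mult: "Poly_Mapping.lookup (const x * (f::('v,'k::comm_ring_1) mpoly)) c = x * Poly_Mapping.lookup f c"
proof -
  have "const x * f = Poly_Mapping.map ((*) x) f" by (simp add: const_def mult_map_scale_conv_mult)
  then show ?thesis by (simp add: Poly_Mapping.map.rep_eq when_def)
qed

lemma mle_add_diff: "mle d c \<Longrightarrow> d + (c - d) = (c::'v \<Rightarrow>\<^sub>0 nat)"
  by (rule poly_mapping_eqI) (simp add: mle_def lookup_add lookup_minus)

lemma lookup_monom_mult:
  "Poly_Mapping.lookup (monom d * (f::('v,'k::comm_ring_1) mpoly)) c = (if mle d c then Poly_Mapping.lookup f (c - d) else 0)"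
proof -
  have "Poly_Mapping.lookup (monom d * f) c = (\<Sum>q. Poly_Mapping.lookup f q when c = d + q)"
    by (simp add: lookup_mult monom_def lookup_single when_mult)
  also have "\<dots> = (if mle d c then Poly_Mapping.lookup f (c - d) else 0)"
  proof (cases "mle d c")
    case True
    have "\<And>q. (c = d + q) = (q = c - d)"
      using mle_add_diff[OF True] by (metis add_diff_cancel_left')
    then show ?thesis using True by simp
  next
    case False
    have "\<And>q. c \<noteq> d + q" using False by (auto simp: mle_def lookup_add)
    then show ?thesis using False by (simp add: when_def)
  qed
  finally show ?thesis .
qed

lemma monom_mult_monom: "monom a * monom b = (monom (a + b) :: ('v,'k::comm_ring_1) mpoly)"
  by (simp add: monom_def mult_single)

lemma const_mult_monom: "const x * monom c = (Poly_Mapping.single c x :: ('v,'k::comm_ring_1) mpoly)"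
  by (simp add: monom_def const_def mult_single)

lemma poly_decomp: "(f::('v,'k::comm_ring_1) mpoly) = (\<Sum>c\<in>Poly_Mapping.keys f. const (Poly_Mapping.lookup f c) * monom c)"
  apply (rule poly_mapping_eqI)
  apply (simp add: const_mult_monom lookup_sum lookup_single when_def)
  apply (auto simp: in_keys_iff)
  done

lemma keys_const_mult: "Poly_Mapping.keys (const x * (f::('v,'k::comm_ring_1) mpoly)) \<subseteq> Poly_Mapping.keys f"
  by (auto simp: in_keys_iff lookup_const_mult)




lemma mle_trans: "mle x y \<Longrightarrow> mle y z \<Longrightarrow> mle x z"
  unfolding mle_def using le_trans by blast
lemma mle_antisym: "mle x y \<Longrightarrow> mle y x \<Longrightarrow> x = y"
  unfolding mle_def by (rule poly_mapping_eqI) (meson antisym)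
lemma mle_refl: "mle x x" by (simp add: mle_def)
lemma h1: "mle x y \<Longrightarrow> mle y b \<Longrightarrow> (y - x) + (b - y) = (b - x :: 'v \<Rightarrow>\<^sub>0 nat)"
proof (rule poly_mapping_eqI)
  fix k assume "mle x y" "mle y b"
  then have "Poly_Mapping.lookup x k \<le> Poly_Mapping.lookup y k" "Poly_Mapping.lookup y k \<le> Poly_Mapping.lookup b k"
    by (auto simp: mle_def)
  then show "Poly_Mapping.lookup (y - x + (b - y)) k = Poly_Mapping.lookup (b - x) k"
    by (simp add: lookup_add lookup_minus)
qed
lemma h2: "mle a A \<Longrightarrow> mle a b \<Longrightarrow> mle (A - a) (b - a) = mle A (b :: 'v \<Rightarrow>\<^sub>0 nat)"
  unfolding mle_def by (auto simp: lookup_minus) (metis diff_le_mono2 le_diff_iff)+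
lemma h3: "mle a A \<Longrightarrow> mle A b \<Longrightarrow> (b - a) - (A - a) = (b - A :: 'v \<Rightarrow>\<^sub>0 nat)"
  unfolding mle_def by (rule poly_mapping_eqI) (simp add: lookup_minus)

lemma sum_single: "(\<Sum>j\<in>A. Poly_Mapping.single d (f j)) = Poly_Mapping.single d (\<Sum>j\<in>A. f j)"
  by (induction A rule: infinite_finite_induct) (auto simp: single_add)

lemma const_zero[simp]: "const 0 = 0" by (simp add: const_def)
lemma const_one[simp]: "const 1 = 1" by (simp add: const_def)




locale resol =
  fixes I :: "('v, 'k::field) mpoly set" and p :: nat and \<beta> :: "nat \<Rightarrow> nat"
    and a :: "nat \<Rightarrow> nat \<Rightarrow> ('v \<Rightarrow>\<^sub>0 nat)" and lam :: "nat \<Rightarrow> nat \<Rightarrow> nat \<Rightarrow> 'k"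
  assumes res: "is_min_graded_res I p \<beta> a lam"
begin

lemma beta0: "\<beta> 0 = 1" using res by (simp add: is_min_graded_res_def)
lemma betap: "p < i \<Longrightarrow> \<beta> i = 0" using res by (simp add: is_min_graded_res_def)
lemma degs: "1 \<le> i \<Longrightarrow> j < \<beta> i \<Longrightarrow> k < \<beta> (i - 1) \<Longrightarrow> lam i k j \<noteq> 0 \<Longrightarrow>
         mle (a (i - 1) k) (a i j) \<and> a (i - 1) k \<noteq> a i j"
  using res unfolding is_min_graded_res_def by blast
lemma exact: "1 \<le> i \<Longrightarrow> i \<le> p \<Longrightarrow>
  {u \<in> freemod (\<beta> i). dres \<beta> a lam i u = (\<lambda>_. 0)} = dres \<beta> a lam (Suc i) ` freemod (\<beta> (Suc i))"
  using res unfolding is_min_graded_res_def by blast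
lemma i_le_p: "j < \<beta> i \<Longrightarrow> i \<le> p" using betap by (metis not_le not_less0)

lemma strand:
  assumes i1: "1 \<le> i" and ip: "i \<le> p"
  and vsupp: "\<And>j. v j \<noteq> 0 \<Longrightarrow> j < \<beta> i \<and> mle (a i j) b"
  and vker: "\<And>k. k < \<beta> (i - 1) \<Longrightarrow> (\<Sum>j<\<beta> i. lam i k j * v j) = 0"
  shows "\<exists>w. (\<forall>j'. w j' \<noteq> 0 \<longrightarrow> j' < \<beta> (Suc i) \<and> mle (a (Suc i) j') b) \<and>
             (\<forall>j<\<beta> i. v j = (\<Sum>j'<\<beta> (Suc i). lam (Suc i) j j' * w j'))"
proof -
  define u where "u = (\<lambda>j. const (v j) * monom (b - a i j) :: ('v,'k) mpoly)"
  have uj: "u j = Poly_Mapping.single (b - a i j) (v j)" for j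
    by (simp add: u_def const_mult_monom)
  have ufree: "u \<in> freemod (\<beta> i)"
    unfolding freemod_def using vsupp by (auto simp: uj) (metis leD single_zero)
  have uker: "dres \<beta> a lam i u = (\<lambda>_. 0)"
  proof
    fix k
    show "dres \<beta> a lam i u k = 0"
    proof (cases "k < \<beta> (i-1)")
      case True
      have trm: "const (lam i k j) * monom (a i j - a (i-1) k) * u j
           = Poly_Mapping.single (b - a (i-1) k) (lam i k j * v j)" if j: "j < \<beta> i" for j
      proof (cases "lam i k j * v j = 0")
        case True
        then show ?thesis by (auto simp: uj)
      next
        case False
        then have l: "lam i k j \<noteq> 0" and v: "v j \<noteq> 0" by auto
        have m1: "mle (a (i-1) k) (a i j)" using degs[OF i1 j \<open>k < \<beta> (i-1)\<close> l] by blast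
        have m2: "mle (a i j) b" using vsupp[OF v] by blast
        show ?thesis
          using h1[OF m1 m2] by (simp add: uj const_mult_monom mult_single)
      qed
      have "dres \<beta> a lam i u k = (\<Sum>j<\<beta> i. const (lam i k j) * monom (a i j - a (i-1) k) * u j)"
        using True by (simp add: dres_def)
      also have "\<dots> = (\<Sum>j<\<beta> i. Poly_Mapping.single (b - a (i-1) k) (lam i k j * v j))"
        by (rule sum.cong[OF refl], rule trm) simp
      also have "\<dots> = 0" by (simp add: sum_single vker[OF True])
      finally show ?thesis .
    qed (simp add: dres_def)
  qed
  have "u \<in> dres \<beta> a lam (Suc i) ` freemod (\<beta> (Suc i))"
    using exact[OF i1 ip] ufree uker by blast
  then obtain w where wfree: "w \<in> freemod (\<beta> (Suc i))" and uw: "u = dres \<beta> a lam (Suc i) w"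
    by blast
  define w' where "w' = (\<lambda>j'. if mle (a (Suc i) j') b then Poly_Mapping.lookup (w j') (b - a (Suc i) j') else 0)"
  have P1: "\<forall>j'. w' j' \<noteq> 0 \<longrightarrow> j' < \<beta> (Suc i) \<and> mle (a (Suc i) j') b"
  proof (intro allI impI)
    fix j' assume "w' j' \<noteq> 0"
    then show "j' < \<beta> (Suc i) \<and> mle (a (Suc i) j') b"
      using wfree by (auto simp: w'_def freemod_def split: if_splits) (metis lookup_zero not_le)
  qed
  have P2: "\<forall>j<\<beta> i. v j = (\<Sum>j'<\<beta> (Suc i). lam (Suc i) j j' * w' j')"
  proof (intro allI impI)
    fix j assume j: "j < \<beta> i"
    show "v j = (\<Sum>j'<\<beta> (Suc i). lam (Suc i) j j' * w' j')"
    proof (cases "mle (a i j) b")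
      case nb: False
      have "v j = 0" using vsupp nb by blast
      moreover have "lam (Suc i) j j' * w' j' = 0" if j': "j' < \<beta> (Suc i)" for j'
      proof (rule ccontr)
        assume "lam (Suc i) j j' * w' j' \<noteq> 0"
        then have "lam (Suc i) j j' \<noteq> 0" "mle (a (Suc i) j') b" by (auto simp: w'_def split: if_splits)
        moreover have "mle (a i j) (a (Suc i) j')" if "lam (Suc i) j j' \<noteq> 0"
          using degs[of "Suc i" j' j] j j' that by simp
        ultimately show False using nb mle_trans by blast
      qed
      ultimately show ?thesis by (simp add: sum.neutral)
    next
      case mb: True
    have "v j = Poly_Mapping.lookup (u j) (b - a i j)" by (simp add: uj)
    also have "\<dots> = Poly_Mapping.lookup (dres \<beta> a lam (Suc i) w j) (b - a i j)" using uw by simp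
    also have "\<dots> = (\<Sum>j'<\<beta> (Suc i). lam (Suc i) j j' *
          (if mle (a (Suc i) j' - a i j) (b - a i j) then Poly_Mapping.lookup (w j') ((b - a i j) - (a (Suc i) j' - a i j)) else 0))"
      using j by (simp add: dres_def lookup_sum mult.assoc lookup_const_mult lookup_monom_mult)
    also have "\<dots> = (\<Sum>j'<\<beta> (Suc i). lam (Suc i) j j' * w' j')"
    proof (rule sum.cong[OF refl])
      fix j' assume j': "j' \<in> {..<\<beta> (Suc i)}"
      show "lam (Suc i) j j' *
          (if mle (a (Suc i) j' - a i j) (b - a i j) then Poly_Mapping.lookup (w j') ((b - a i j) - (a (Suc i) j' - a i j)) else 0)
          = lam (Suc i) j j' * w' j'"
      proof (cases "lam (Suc i) j j' = 0")
        case False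
        have m1: "mle (a i j) (a (Suc i) j')" using degs[of "Suc i" j' j] j j' False by simp
        show ?thesis using m1 mb by (auto simp: w'_def h2 h3)
      qed simp
    qed
    finally show ?thesis .
    qed
  qed
  show ?thesis using P1 P2 by blast
qed

end



lemma lookup_single_prod: "(x \<noteq> 0 \<Longrightarrow> d = D) \<Longrightarrow> Poly_Mapping.lookup (Poly_Mapping.single d x) D = x"
  by (cases "x = 0") (auto simp: lookup_single)

context resol begin

lemma dd:
  assumes i1: "1 \<le> i" and ip: "i \<le> p" and j: "j < \<beta> (Suc i)" and k: "k < \<beta> (i - 1)"
  shows "(\<Sum>k'<\<beta> i. lam i k k' * lam (Suc i) k' j) = 0"
proof -
  define e where "e = (\<lambda>j'. if j' = j then (1::('v,'k) mpoly) else 0)"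
  have efree: "e \<in> freemod (\<beta> (Suc i))" using j by (auto simp: freemod_def e_def)
  have "dres \<beta> a lam (Suc i) e \<in> {u \<in> freemod (\<beta> i). dres \<beta> a lam i u = (\<lambda>_. 0)}"
    using exact[OF i1 ip] efree by blast
  then have z: "dres \<beta> a lam i (dres \<beta> a lam (Suc i) e) k = 0" by simp
  have de: "dres \<beta> a lam (Suc i) e k' = Poly_Mapping.single (a (Suc i) j - a i k') (lam (Suc i) k' j)"
    if "k' < \<beta> i" for k'
  proof -
    have "dres \<beta> a lam (Suc i) e k' = (\<Sum>j'<\<beta> (Suc i). if j' = j then const (lam (Suc i) k' j') * monom (a (Suc i) j' - a i k') else 0)"
      using that by (simp add: dres_def e_def if_distrib cong: if_cong)
    also have "\<dots> = const (lam (Suc i) k' j) * monom (a (Suc i) j - a i k')"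
      using j by (simp add: sum.delta)
    finally show ?thesis by (simp add: const_mult_monom)
  qed
  have "0 = Poly_Mapping.lookup (dres \<beta> a lam i (dres \<beta> a lam (Suc i) e) k) (a (Suc i) j - a (i - 1) k)"
    using z by simp
  also have "\<dots> = (\<Sum>k'<\<beta> i. Poly_Mapping.lookup (const (lam i k k') * monom (a i k' - a (i - 1) k) * dres \<beta> a lam (Suc i) e k') (a (Suc i) j - a (i - 1) k))"
    using k by (simp add: dres_def lookup_sum)
  also have "\<dots> = (\<Sum>k'<\<beta> i. lam i k k' * lam (Suc i) k' j)"
  proof (rule sum.cong[OF refl])
    fix k' assume k': "k' \<in> {..<\<beta> i}"
    have "const (lam i k k') * monom (a i k' - a (i - 1) k) * dres \<beta> a lam (Suc i) e k'
       = Poly_Mapping.single ((a i k' - a (i - 1) k) + (a (Suc i) j - a i k')) (lam i k k' * lam (Suc i) k' j)"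
      using k' by (simp add: de const_mult_monom mult_single)
    also have "Poly_Mapping.lookup \<dots> (a (Suc i) j - a (i - 1) k) = lam i k k' * lam (Suc i) k' j"
    proof (rule lookup_single_prod)
      assume "lam i k k' * lam (Suc i) k' j \<noteq> 0"
      then have l1: "lam i k k' \<noteq> 0" and l2: "lam (Suc i) k' j \<noteq> 0" by auto
      have m1: "mle (a (i - 1) k) (a i k')" using degs[OF i1 _ k l1] k' by simp
      have m2: "mle (a i k') (a (Suc i) j)" using degs[of "Suc i" j k'] j k' l2 by simp
      show "a i k' - a (i - 1) k + (a (Suc i) j - a i k') = a (Suc i) j - a (i - 1) k"
        by (rule h1[OF m1 m2])
    qed
    finally show "Poly_Mapping.lookup (const (lam i k k') * monom (a i k' - a (i - 1) k) * dres \<beta> a lam (Suc i) e k') (a (Suc i) j - a (i - 1) k) = lam i k k' * lam (Suc i) k' j" .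
  qed
  finally show ?thesis by simp
qed

lemma core:
  assumes i1: "1 \<le> i" and j: "j < \<beta> i"
  and vsupp: "\<And>j'. v j' \<noteq> 0 \<Longrightarrow> j' < \<beta> i \<and> mle (a i j') (a i j)"
  and vj: "v j \<noteq> 0"
  and vker: "\<And>k. k < \<beta> (i - 1) \<Longrightarrow> (\<Sum>j'<\<beta> i. lam i k j' * v j') = 0"
  shows False
proof -
  have ip: "i \<le> p" using i_le_p[OF j] .
  obtain w where wsupp: "\<forall>j'. w j' \<noteq> 0 \<longrightarrow> j' < \<beta> (Suc i) \<and> mle (a (Suc i) j') (a i j)"
    and wv: "\<forall>j<\<beta> i. v j = (\<Sum>j'<\<beta> (Suc i). lam (Suc i) j j' * w j')"
    using strand[OF i1 ip vsupp vker] by blast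
  have "lam (Suc i) j j' * w j' = 0" if "j' < \<beta> (Suc i)" for j'
  proof (rule ccontr)
    assume "lam (Suc i) j j' * w j' \<noteq> 0"
    then have l: "lam (Suc i) j j' \<noteq> 0" and "w j' \<noteq> 0" by auto
    then have m2: "mle (a (Suc i) j') (a i j)" using wsupp by blast
    have "mle (a i j) (a (Suc i) j') \<and> a i j \<noteq> a (Suc i) j'" using degs[of "Suc i" j' j] that j l by simp
    then show False using m2 mle_antisym by blast
  qed
  then have "(\<Sum>j'<\<beta> (Suc i). lam (Suc i) j j' * w j') = 0" by (intro sum.neutral) simp
  then have "v j = 0" using wv j by simp
  then show False using vj by simp
qed

lemma colnz:
  assumes i1: "1 \<le> i" and j: "j < \<beta> (Suc i)"
  shows "\<exists>k<\<beta> i. lam (Suc i) k j \<noteq> 0"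
proof (rule ccontr)
  assume nz: "\<not> ?thesis"
  define v where "v = (\<lambda>j'. if j' = j then (1::'k) else 0)"
  show False
  proof (rule core[of "Suc i" j v])
    show "\<And>k. k < \<beta> (Suc i - 1) \<Longrightarrow> (\<Sum>j'<\<beta> (Suc i). lam (Suc i) k j' * v j') = 0"
      using nz j by (simp add: v_def if_distrib cong: if_cong)
  qed (use j in \<open>auto simp: v_def mle_refl split: if_splits\<close>)
qed

lemma lcm:
  assumes i1: "1 \<le> i" and j: "j < \<beta> (Suc i)"
  and hb: "\<And>k. k < \<beta> i \<Longrightarrow> lam (Suc i) k j \<noteq> 0 \<Longrightarrow> mle (a i k) b"
  shows "mle (a (Suc i) j) b"
proof (rule ccontr)
  assume nb: "\<not> mle (a (Suc i) j) b"
  have ip: "i \<le> p" using i_le_p[OF j] by simp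
  define c where "c = Abs_poly_mapping (\<lambda>l. min (Poly_Mapping.lookup (a (Suc i) j) l) (Poly_Mapping.lookup b l))"
  have "finite {l. min (Poly_Mapping.lookup (a (Suc i) j) l) (Poly_Mapping.lookup b l) \<noteq> 0}"
    by (rule finite_subset[of _ "Poly_Mapping.keys (a (Suc i) j)"]) (auto simp: in_keys_iff)
  then have lc: "Poly_Mapping.lookup c l = min (Poly_Mapping.lookup (a (Suc i) j) l) (Poly_Mapping.lookup b l)" for l
    by (simp add: c_def)
  have c1: "mle c (a (Suc i) j)" and c2: "mle c b" by (auto simp: mle_def lc)
  have c3: "mle x c" if "mle x (a (Suc i) j)" "mle x b" for x using that by (auto simp: mle_def lc)
  define w where "w = (\<lambda>k. if k < \<beta> i then lam (Suc i) k j else 0)"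
  have wsupp: "w k \<noteq> 0 \<Longrightarrow> k < \<beta> i \<and> mle (a i k) c" for k
  proof -
    assume "w k \<noteq> 0"
    then have k: "k < \<beta> i" and l: "lam (Suc i) k j \<noteq> 0" by (auto simp: w_def split: if_splits)
    have "mle (a i k) (a (Suc i) j)" using degs[of "Suc i" j k] j k l by simp
    then show ?thesis using k c3 hb[OF k l] by blast
  qed
  have wker: "(\<Sum>k<\<beta> i. lam i k' k * w k) = 0" if "k' < \<beta> (i - 1)" for k'
    using dd[OF i1 ip j that] by (simp add: w_def)
  obtain w' where w'supp: "\<forall>j'. w' j' \<noteq> 0 \<longrightarrow> j' < \<beta> (Suc i) \<and> mle (a (Suc i) j') c"
    and ww: "\<forall>k<\<beta> i. w k = (\<Sum>j'<\<beta> (Suc i). lam (Suc i) k j' * w' j')"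
    using strand[OF i1 ip, of w c] wsupp wker by blast
  have w'j: "w' j = 0"
  proof (rule ccontr)
    assume "w' j \<noteq> 0"
    then have "mle (a (Suc i) j) c" using w'supp by blast
    then show False using nb c2 mle_trans by blast
  qed
  define v where "v = (\<lambda>j'. (if j' = j then (1::'k) else 0) - w' j')"
  show False
  proof (rule core[of "Suc i" j v])
    show "v j \<noteq> 0" by (simp add: v_def w'j)
    show "v j' \<noteq> 0 \<Longrightarrow> j' < \<beta> (Suc i) \<and> mle (a (Suc i) j') (a (Suc i) j)" for j'
      using w'supp j c1 mle_trans mle_refl by (auto simp: v_def split: if_splits)
    fix k assume k: "k < \<beta> (Suc i - 1)"
    then have k': "k < \<beta> i" by simp
    have "(\<Sum>j'<\<beta> (Suc i). lam (Suc i) k j' * v j') =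
          (\<Sum>j'<\<beta> (Suc i). (if j' = j then lam (Suc i) k j' else 0)) - (\<Sum>j'<\<beta> (Suc i). lam (Suc i) k j' * w' j')"
    proof -
      have "lam (Suc i) k j' * v j' = (if j' = j then lam (Suc i) k j' else 0) - lam (Suc i) k j' * w' j'" for j'
        by (simp add: v_def right_diff_distrib)
      then show ?thesis by (simp add: sum_subtractf)
    qed
    also have "\<dots> = lam (Suc i) k j - w k" using j ww k' by (simp add: sum.delta)
    also have "\<dots> = 0" using k' by (simp add: w_def)
    finally show "(\<Sum>j'<\<beta> (Suc i). lam (Suc i) k j' * v j') = 0" .
  qed (use i1 j in auto)
qed

end



lemma ideal_gen_sub: "G \<subseteq> ideal_gen R G"
  unfolding ideal_gen_def by blast
lemma ideal_gen_least: "is_ideal_in R Q \<Longrightarrow> G \<subseteq> Q \<Longrightarrow> ideal_gen R G \<subseteq> Q"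
  unfolding ideal_gen_def by blast
lemma ideal_gen_ideal_UNIV: "is_ideal_in UNIV (ideal_gen UNIV G)"
  unfolding ideal_gen_def is_ideal_in_def by blast

lemma ideal_sum: "is_ideal_in R J \<Longrightarrow> (\<And>x. x \<in> A \<Longrightarrow> g x \<in> J) \<Longrightarrow> sum g A \<in> J"
proof (induction A rule: infinite_finite_induct)
  case (infinite A) then show ?case by (simp add: is_ideal_in_def)
next
  case empty then show ?case by (simp add: is_ideal_in_def)
next
  case (insert x F) then show ?case by (simp add: is_ideal_in_def)
qed

definition KS :: "(('w \<Rightarrow>\<^sub>0 nat) \<Rightarrow> bool) \<Rightarrow> ('w, 'k::comm_ring_1) mpoly set" where
  "KS Q = {f. \<forall>c\<in>Poly_Mapping.keys f. Q c}"

lemma KS_ideal: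
  fixes Q :: "('w \<Rightarrow>\<^sub>0 nat) \<Rightarrow> bool"
  assumes up: "\<And>c d. Q c \<Longrightarrow> Q (d + c)"
  shows "is_ideal_in UNIV (KS Q :: ('w,'k::comm_ring_1) mpoly set)"
  unfolding is_ideal_in_def
proof (intro conjI ballI)
  fix x y :: "('w,'k) mpoly"
  assume "x \<in> KS Q" "y \<in> KS Q"
  then show "x + y \<in> KS Q" using keys_add[of x y] by (auto simp: KS_def)
next
  fix r x :: "('w,'k) mpoly"
  assume "x \<in> KS Q"
  then show "r * x \<in> KS Q" using keys_mult[of r x] up by (auto simp: KS_def)
qed (auto simp: KS_def)

lemma keys_add_nat: "Poly_Mapping.keys (a + b) \<subseteq> Poly_Mapping.keys a \<union> Poly_Mapping.keys (b :: 'w \<Rightarrow>\<^sub>0 nat)"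
  by (auto simp: in_keys_iff lookup_add)
lemma keys_minus_nat: "Poly_Mapping.keys (a - b) \<subseteq> Poly_Mapping.keys (a :: 'w \<Rightarrow>\<^sub>0 nat)"
  by (auto simp: in_keys_iff lookup_minus)
lemma keys_monom: "Poly_Mapping.keys (monom c :: ('w,'k::comm_ring_1) mpoly) = {c}"
  by (simp add: monom_def)

lemma monom_subring: "Poly_Mapping.keys c \<subseteq> V \<Longrightarrow> (monom c :: ('w,'k::comm_ring_1) mpoly) \<in> subring_vars V"
  by (simp add: subring_vars_def keys_monom)

lemma mono_ideal_monom:
  assumes J: "monomial_ideal_in V (J :: ('w,'k::comm_ring_1) mpoly set)"
  and f: "f \<in> J" and c: "c \<in> Poly_Mapping.keys f"
  shows "monom c \<in> J"
proof -
  obtain M where JI: "is_ideal_in (subring_vars V) J" and MV: "\<forall>a\<in>M. Poly_Mapping.keys a \<subseteq> V"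
    and JM: "J = ideal_gen (subring_vars V) (monom ` M)"
    using J unfolding monomial_ideal_in_def by blast
  define Q where "Q = ({f \<in> subring_vars V. \<forall>c\<in>Poly_Mapping.keys f. \<exists>d\<in>M. mle d c} :: ('w,'k) mpoly set)"
  have QI: "is_ideal_in (subring_vars V) Q"
    unfolding is_ideal_in_def
  proof (intro conjI ballI)
    show "Q \<subseteq> subring_vars V" by (auto simp: Q_def)
    show "0 \<in> Q" by (auto simp: Q_def subring_vars_def)
  next
    fix x y :: "('w,'k) mpoly" assume "x \<in> Q" "y \<in> Q"
    then show "x + y \<in> Q" unfolding Q_def subring_vars_def using keys_add[of x y] by blast
  next
    fix r x :: "('w,'k) mpoly" assume r: "r \<in> subring_vars V" and x: "x \<in> Q"
    have "r * x \<in> subring_vars V"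
      unfolding subring_vars_def
    proof (intro CollectI ballI)
      fix e assume "e \<in> Poly_Mapping.keys (r * x)"
      then obtain a b where "a \<in> Poly_Mapping.keys r" "b \<in> Poly_Mapping.keys x" "e = a + b"
        using keys_mult[of r x] by blast
      then show "Poly_Mapping.keys e \<subseteq> V" using r x keys_add_nat[of a b]
        unfolding Q_def subring_vars_def by blast
    qed
    moreover have "\<forall>e\<in>Poly_Mapping.keys (r * x). \<exists>d\<in>M. mle d e"
    proof
      fix e assume "e \<in> Poly_Mapping.keys (r * x)"
      then obtain a b where "b \<in> Poly_Mapping.keys x" "e = a + b"
        using keys_mult[of r x] by blast
      moreover obtain d where "d \<in> M" "mle d b" using x \<open>b \<in> _\<close> unfolding Q_def by blast
      ultimately show "\<exists>d\<in>M. mle d e" by (auto simp: mle_def lookup_add intro: trans_le_add2)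
    qed
    ultimately show "r * x \<in> Q" by (simp add: Q_def)
  qed
  have "monom ` M \<subseteq> Q" using MV mle_refl by (auto simp: Q_def keys_monom monom_subring) blast
  then have "J \<subseteq> Q" unfolding JM by (rule ideal_gen_least[OF QI])
  then obtain d where d: "d \<in> M" "mle d c" using f c by (auto simp: Q_def)
  have fV: "f \<in> subring_vars V" using JI f by (auto simp: is_ideal_in_def)
  have "(monom (c - d) :: ('w,'k) mpoly) \<in> subring_vars V"
    using fV c keys_minus_nat[of c d] by (intro monom_subring) (auto simp: subring_vars_def)
  moreover have "monom d \<in> J" using d(1) ideal_gen_sub JM by blast
  ultimately have "monom (c - d) * monom d \<in> J" using JI by (simp add: is_ideal_in_def)
  moreover have "c - d + d = c" using d(2) mle_add_diff[of d c] by (simp add: add.commute)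
  ultimately show ?thesis by (simp add: monom_mult_monom)
qed

lemma mono_ideal_up:
  assumes J: "monomial_ideal_in V (J :: ('w,'k::comm_ring_1) mpoly set)"
  and e: "monom e \<in> J" and g: "Poly_Mapping.keys g \<subseteq> V"
  shows "monom (g + e) \<in> J"
proof -
  have JI: "is_ideal_in (subring_vars V) J" using J by (simp add: monomial_ideal_in_def)
  have "monom g * monom e \<in> J" using JI e monom_subring[OF g] unfolding is_ideal_in_def by blast
  then show ?thesis by (simp add: monom_mult_monom)
qed

lemma mono_ideal_sub: "monomial_ideal_in V J \<Longrightarrow> f \<in> J \<Longrightarrow> Poly_Mapping.keys c \<subseteq> V \<or> c \<notin> Poly_Mapping.keys f"
  by (auto simp: monomial_ideal_in_def is_ideal_in_def subring_vars_def)




definition restr :: "('w \<Rightarrow> 'v) \<Rightarrow> 'v \<Rightarrow> ('w \<Rightarrow>\<^sub>0 nat) \<Rightarrow> ('w \<Rightarrow>\<^sub>0 nat)" where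
  "restr g l c = Abs_poly_mapping (\<lambda>w. if g w = l then Poly_Mapping.lookup c w else 0)"

lemma lookup_restr: "Poly_Mapping.lookup (restr g l c) w = (if g w = l then Poly_Mapping.lookup c w else 0)"
proof -
  have "finite {w. (if g w = l then Poly_Mapping.lookup c w else 0) \<noteq> 0}"
    by (rule finite_subset[of _ "Poly_Mapping.keys c"]) (auto simp: in_keys_iff)
  then show ?thesis by (simp add: restr_def)
qed

lemma restr_add: "restr g l (c + d) = restr g l c + restr g l d"
  by (rule poly_mapping_eqI) (simp add: lookup_restr lookup_add)
lemma restr_zero: "restr g l 0 = 0"
  by (rule poly_mapping_eqI) (simp add: lookup_restr)
lemma restr_sum: "restr g l (sum f S) = (\<Sum>x\<in>S. restr g l (f x))"
  by (induction S rule: infinite_finite_induct) (auto simp: restr_add restr_zero)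
lemma keys_restr: "Poly_Mapping.keys (restr g l c) \<subseteq> {w. g w = l}"
  by (auto simp: in_keys_iff lookup_restr split: if_splits)
lemma restr_other: "Poly_Mapping.keys c \<subseteq> {w. g w = l'} \<Longrightarrow> l \<noteq> l' \<Longrightarrow> restr g l c = 0"
  by (rule poly_mapping_eqI) (auto simp: lookup_restr in_keys_iff)
lemma restr_same: "Poly_Mapping.keys c \<subseteq> {w. g w = l} \<Longrightarrow> restr g l c = c"
  by (rule poly_mapping_eqI) (auto simp: lookup_restr in_keys_iff)
lemma sum_restr: "(\<Sum>l\<in>(UNIV::'v::finite set). restr g l c) = c"
  by (rule poly_mapping_eqI) (simp add: lookup_sum lookup_restr)

lemma monom_sum: "finite S \<Longrightarrow> monom (sum f S) = (\<Prod>l\<in>S. (monom (f l) :: ('w,'k::comm_ring_1) mpoly))"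
proof (induction S rule: finite_induct)
  case (insert x F)
  have "(monom (f x) :: ('w,'k) mpoly) * monom (sum f F) = monom (f x + sum f F)" by (rule monom_mult_monom)
  then show ?case using insert.hyps insert.IH by simp
qed (simp add: monom_def)

lemma keys_prod:
  assumes "finite S"
  shows "c \<in> Poly_Mapping.keys (\<Prod>l\<in>S. (f l :: ('w,'k::comm_ring_1) mpoly)) \<Longrightarrow>
     \<exists>cs. (\<forall>l\<in>S. cs l \<in> Poly_Mapping.keys (f l)) \<and> c = (\<Sum>l\<in>S. cs l)"
  using assms
proof (induction S arbitrary: c rule: finite_induct)
  case empty
  then show ?case by simp
next
  case (insert x F)
  then have "c \<in> Poly_Mapping.keys (f x * (\<Prod>l\<in>F. f l))" by simp
  then obtain a b where ab: "a \<in> Poly_Mapping.keys (f x)" "b \<in> Poly_Mapping.keys (\<Prod>l\<in>F. f l)" "c = a + b"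
    using keys_mult by blast
  obtain cs where cs: "\<forall>l\<in>F. cs l \<in> Poly_Mapping.keys (f l)" "b = (\<Sum>l\<in>F. cs l)"
    using insert.IH ab(2) by blast
  have "(\<Sum>l\<in>F. (cs(x := a)) l) = (\<Sum>l\<in>F. cs l)"
    using insert.hyps(2) by (intro sum.cong) auto
  then show ?case using ab cs insert.hyps
    by (intro exI[of _ "cs(x := a)"]) auto
qed

locale lset =
  fixes m :: nat and aS :: "nat \<Rightarrow> ('v::finite \<Rightarrow>\<^sub>0 nat)" and grp :: "'w \<Rightarrow> 'v"
    and Lv :: "'v \<Rightarrow> nat \<Rightarrow> ('w, 'k::field) mpoly set" and L :: "nat \<Rightarrow> ('w, 'k) mpoly set"
  assumes Lv_mon: "\<And>l j. j < m \<Longrightarrow> monomial_ideal_in {w. grp w = l} (Lv l (Poly_Mapping.lookup (aS j) l))"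
    and Lv_mono: "\<And>l j k. j < m \<Longrightarrow> k < m \<Longrightarrow> Poly_Mapping.lookup (aS j) l \<ge> Poly_Mapping.lookup (aS k) l \<Longrightarrow>
                    Lv l (Poly_Mapping.lookup (aS j) l) \<subseteq> Lv l (Poly_Mapping.lookup (aS k) l)"
    and L_def: "\<And>j. j < m \<Longrightarrow> L j = ideal_gen UNIV
                    {\<Prod>l\<in>UNIV. f l | f. \<forall>l. f l \<in> Lv l (Poly_Mapping.lookup (aS j) l)}"
begin

definition RR :: "'v \<Rightarrow> nat \<Rightarrow> ('w \<Rightarrow>\<^sub>0 nat) \<Rightarrow> bool" where
  "RR l j c \<longleftrightarrow> (monom (restr grp l c) :: ('w,'k) mpoly) \<in> Lv l (Poly_Mapping.lookup (aS j) l)"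

lemma Lchar:
  assumes j: "j < m"
  shows "L j = KS (\<lambda>c. \<forall>l. RR l j c)"
proof
  have up: "\<forall>l. RR l j (d + c)" if "\<forall>l. RR l j c" for c d
  proof
    fix l
    have "(monom (restr grp l d + restr grp l c) :: ('w,'k) mpoly) \<in> Lv l (Poly_Mapping.lookup (aS j) l)"
      by (rule mono_ideal_up[OF Lv_mon[OF j] that[rule_format, of l, unfolded RR_def] keys_restr])
    then show "RR l j (d + c)" by (simp add: RR_def restr_add)
  qed
  show "L j \<subseteq> KS (\<lambda>c. \<forall>l. RR l j c)"
    unfolding L_def[OF j]
  proof (rule ideal_gen_least[OF KS_ideal], rule up, assumption, rule subsetI)
    fix x assume "x \<in> {\<Prod>l\<in>UNIV. f l | f. \<forall>l. f l \<in> Lv l (Poly_Mapping.lookup (aS j) l)}"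
    then obtain F where x: "x = (\<Prod>l\<in>UNIV. F l)" and F: "\<forall>l. F l \<in> Lv l (Poly_Mapping.lookup (aS j) l)" by blast
    show "x \<in> KS (\<lambda>c. \<forall>l. RR l j c)"
      unfolding KS_def
    proof (intro CollectI ballI allI)
      fix c l assume c: "c \<in> Poly_Mapping.keys x"
      obtain cs where cs: "\<forall>l. cs l \<in> Poly_Mapping.keys (F l)" "c = (\<Sum>l\<in>UNIV. cs l)"
        using keys_prod[of UNIV c F] c x by auto
      have kcs: "Poly_Mapping.keys (cs l') \<subseteq> {w. grp w = l'}" for l'
        using mono_ideal_sub[OF Lv_mon[OF j] F[rule_format, of l'], of "cs l'"] cs(1) by blast
      have "restr grp l c = (\<Sum>l'\<in>UNIV. if l' = l then cs l else 0)"
        unfolding cs(2) restr_sum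
      proof (rule sum.cong[OF refl])
        fix l' show "restr grp l (cs l') = (if l' = l then cs l else 0)"
        proof (cases "l' = l")
          case True then show ?thesis using restr_same[OF kcs[of l]] by simp
        next
          case False then show ?thesis using restr_other[OF kcs[of l'], of l] by simp
        qed
      qed
      also have "\<dots> = cs l" by simp
      finally have "restr grp l c = cs l" .
      then show "RR l j c" unfolding RR_def
        using mono_ideal_monom[OF Lv_mon[OF j] F[rule_format, of l]] cs(1) by simp
    qed
  qed
  show "KS (\<lambda>c. \<forall>l. RR l j c) \<subseteq> L j"
  proof
    fix f :: "('w,'k) mpoly" assume f: "f \<in> KS (\<lambda>c. \<forall>l. RR l j c)"
    have JI: "is_ideal_in UNIV (L j)" unfolding L_def[OF j] by (rule ideal_gen_ideal_UNIV)
    have "monom c \<in> L j" if c: "c \<in> Poly_Mapping.keys f" for c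
    proof -
      have e1: "(monom c :: ('w,'k) mpoly) = (\<Prod>l\<in>UNIV. monom (restr grp l c))"
        using monom_sum[of UNIV "\<lambda>l. restr grp l c"] by (simp add: sum_restr)
      have e2: "(\<Prod>l\<in>UNIV. monom (restr grp l c)) \<in> {\<Prod>l\<in>UNIV. f l | f. \<forall>l. f l \<in> Lv l (Poly_Mapping.lookup (aS j) l)}"
        using f c unfolding KS_def RR_def by blast
      have e3: "{\<Prod>l\<in>UNIV. f l | f. \<forall>l. f l \<in> Lv l (Poly_Mapping.lookup (aS j) l)} \<subseteq> L j"
        unfolding L_def[OF j] by (rule ideal_gen_sub)
      show ?thesis unfolding e1 by (rule subsetD[OF e3 e2])
    qed
    then have "(\<Sum>c\<in>Poly_Mapping.keys f. const (Poly_Mapping.lookup f c) * monom c) \<in> L j"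
      using JI by (intro ideal_sum[OF JI]) (auto simp: is_ideal_in_def)
    then show "f \<in> L j" using poly_decomp[of f] by simp
  qed
qed

end



locale full = resol I p \<beta> a lam + lset m aS grp Lv L
  for I :: "('v::finite, 'k::field) mpoly set" and p \<beta> and a :: "nat \<Rightarrow> nat \<Rightarrow> ('v \<Rightarrow>\<^sub>0 nat)"
    and lam :: "nat \<Rightarrow> nat \<Rightarrow> nat \<Rightarrow> 'k" and m aS and grp :: "'w \<Rightarrow> 'v"
    and Lv :: "'v \<Rightarrow> nat \<Rightarrow> ('w, 'k) mpoly set" and L +
  assumes beta1: "\<beta> 1 = m"
    and a1: "\<And>j. j < m \<Longrightarrow> a 1 j = aS j"
    and lam1: "\<And>j. j < m \<Longrightarrow> lam 1 0 j = 1"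
begin

definition good :: "('w \<Rightarrow>\<^sub>0 nat) \<Rightarrow> bool" where
  "good c \<longleftrightarrow> (\<forall>l. \<exists>k<m. RR l k c)"

definition SL :: "'v \<Rightarrow> ('w \<Rightarrow>\<^sub>0 nat) \<Rightarrow> nat set" where
  "SL l c = {Poly_Mapping.lookup (aS k) l | k. k < m \<and> RR l k c}"

definition Bc :: "('w \<Rightarrow>\<^sub>0 nat) \<Rightarrow> ('v \<Rightarrow>\<^sub>0 nat)" where
  "Bc c = Abs_poly_mapping (\<lambda>l. Max (SL l c))"

lemma lookup_Bc: "Poly_Mapping.lookup (Bc c) l = Max (SL l c)"
  unfolding Bc_def by simp

lemma finite_SL: "finite (SL l c)"
proof -
  have "SL l c \<subseteq> (\<lambda>k. Poly_Mapping.lookup (aS k) l) ` {..<m}" by (auto simp: SL_def)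
  then show ?thesis by (rule finite_subset) simp
qed

lemma char1:
  assumes j: "j < m"
  shows "(\<forall>l. RR l j c) \<longleftrightarrow> good c \<and> mle (aS j) (Bc c)"
proof
  assume h: "\<forall>l. RR l j c"
  have "good c" using h j by (auto simp: good_def)
  moreover have "mle (aS j) (Bc c)" unfolding mle_def lookup_Bc
  proof
    fix l
    have "Poly_Mapping.lookup (aS j) l \<in> SL l c" using h j by (auto simp: SL_def)
    then show "Poly_Mapping.lookup (aS j) l \<le> Max (SL l c)" using finite_SL by simp
  qed
  ultimately show "good c \<and> mle (aS j) (Bc c)" ..
next
  assume h: "good c \<and> mle (aS j) (Bc c)"
  show "\<forall>l. RR l j c"
  proof
    fix l
    have ne: "SL l c \<noteq> {}" using h by (auto simp: good_def SL_def)
    have "Max (SL l c) \<in> SL l c" using Max_in[OF finite_SL ne] .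
    then obtain k where k: "k < m" "RR l k c" "Max (SL l c) = Poly_Mapping.lookup (aS k) l"
      by (auto simp: SL_def)
    have "Poly_Mapping.lookup (aS j) l \<le> Poly_Mapping.lookup (aS k) l"
      using h k(3) unfolding mle_def lookup_Bc by metis
    then have "Lv l (Poly_Mapping.lookup (aS k) l) \<subseteq> Lv l (Poly_Mapping.lookup (aS j) l)"
      using Lv_mono[OF k(1) j] by simp
    then show "RR l j c" using k(2) by (auto simp: RR_def)
  qed
qed

lemma KS_cong: "(\<And>c. P c = Q c) \<Longrightarrow> KS P = KS Q"
  by (simp add: KS_def)

lemma LindChar:
  "j < \<beta> (Suc i) \<Longrightarrow> Lind \<beta> lam L (Suc i) j = (KS :: (('w \<Rightarrow>\<^sub>0 nat) \<Rightarrow> bool) \<Rightarrow> ('w,'k) mpoly set) (\<lambda>c. good c \<and> mle (a (Suc i) j) (Bc c))"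
proof (induction i arbitrary: j)
  case 0
  then have j: "j < m" using beta1 by simp
  have "Lind \<beta> lam L (Suc 0) j = L j" by simp
  also have "\<dots> = KS (\<lambda>c. \<forall>l. RR l j c)" by (rule Lchar[OF j])
  also have "\<dots> = (KS :: (('w \<Rightarrow>\<^sub>0 nat) \<Rightarrow> bool) \<Rightarrow> ('w,'k) mpoly set) (\<lambda>c. good c \<and> mle (a (Suc 0) j) (Bc c))"
    using char1[OF j] a1[OF j] by (intro KS_cong) simp
  finally show ?case .
next
  case (Suc i)
  have i1: "1 \<le> Suc i" by simp
  have "Lind \<beta> lam L (Suc (Suc i)) j =
     \<Inter>{Lind \<beta> lam L (Suc i) k | k. k < \<beta> (Suc i) \<and> lam (Suc (Suc i)) k j \<noteq> 0}" by simp
  also have "\<dots> = \<Inter>{(KS :: (('w \<Rightarrow>\<^sub>0 nat) \<Rightarrow> bool) \<Rightarrow> ('w,'k) mpoly set) (\<lambda>c. good c \<and> mle (a (Suc i) k) (Bc c)) | k. k < \<beta> (Suc i) \<and> lam (Suc (Suc i)) k j \<noteq> 0}"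
    using Suc.IH by (metis (no_types, lifting))
  also have "\<dots> = (KS :: (('w \<Rightarrow>\<^sub>0 nat) \<Rightarrow> bool) \<Rightarrow> ('w,'k) mpoly set) (\<lambda>c. good c \<and> mle (a (Suc (Suc i)) j) (Bc c))"
  proof
    show "\<Inter>{(KS :: (('w \<Rightarrow>\<^sub>0 nat) \<Rightarrow> bool) \<Rightarrow> ('w,'k) mpoly set) (\<lambda>c. good c \<and> mle (a (Suc i) k) (Bc c)) | k. k < \<beta> (Suc i) \<and> lam (Suc (Suc i)) k j \<noteq> 0}
          \<subseteq> (KS :: (('w \<Rightarrow>\<^sub>0 nat) \<Rightarrow> bool) \<Rightarrow> ('w,'k) mpoly set) (\<lambda>c. good c \<and> mle (a (Suc (Suc i)) j) (Bc c))"
    proof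
      fix f :: "('w,'k) mpoly" assume f: "f \<in> \<Inter>{(KS :: (('w \<Rightarrow>\<^sub>0 nat) \<Rightarrow> bool) \<Rightarrow> ('w,'k) mpoly set) (\<lambda>c. good c \<and> mle (a (Suc i) k) (Bc c)) | k. k < \<beta> (Suc i) \<and> lam (Suc (Suc i)) k j \<noteq> 0}"
      obtain k0 where k0: "k0 < \<beta> (Suc i)" "lam (Suc (Suc i)) k0 j \<noteq> 0"
        using colnz[OF i1 Suc.prems] by blast
      show "f \<in> (KS :: (('w \<Rightarrow>\<^sub>0 nat) \<Rightarrow> bool) \<Rightarrow> ('w,'k) mpoly set) (\<lambda>c. good c \<and> mle (a (Suc (Suc i)) j) (Bc c))"
        unfolding KS_def
      proof (intro CollectI ballI)
        fix c assume c: "c \<in> Poly_Mapping.keys f"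
        have all: "good c \<and> mle (a (Suc i) k) (Bc c)" if "k < \<beta> (Suc i)" "lam (Suc (Suc i)) k j \<noteq> 0" for k
          using f that c by (auto simp: KS_def)
        have "good c" using all[OF k0] by blast
        moreover have "mle (a (Suc (Suc i)) j) (Bc c)"
          using lcm[OF i1 Suc.prems] all by blast
        ultimately show "good c \<and> mle (a (Suc (Suc i)) j) (Bc c)" ..
      qed
    qed
    show "(KS :: (('w \<Rightarrow>\<^sub>0 nat) \<Rightarrow> bool) \<Rightarrow> ('w,'k) mpoly set) (\<lambda>c. good c \<and> mle (a (Suc (Suc i)) j) (Bc c)) \<subseteq>
      \<Inter>{(KS :: (('w \<Rightarrow>\<^sub>0 nat) \<Rightarrow> bool) \<Rightarrow> ('w,'k) mpoly set) (\<lambda>c. good c \<and> mle (a (Suc i) k) (Bc c)) | k. k < \<beta> (Suc i) \<and> lam (Suc (Suc i)) k j \<noteq> 0}"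
    proof (rule Inter_greatest)
      fix X assume "X \<in> {(KS :: (('w \<Rightarrow>\<^sub>0 nat) \<Rightarrow> bool) \<Rightarrow> ('w,'k) mpoly set) (\<lambda>c. good c \<and> mle (a (Suc i) k) (Bc c)) | k. k < \<beta> (Suc i) \<and> lam (Suc (Suc i)) k j \<noteq> 0}"
      then obtain k where k: "k < \<beta> (Suc i)" "lam (Suc (Suc i)) k j \<noteq> 0"
        and X: "X = (KS :: (('w \<Rightarrow>\<^sub>0 nat) \<Rightarrow> bool) \<Rightarrow> ('w,'k) mpoly set) (\<lambda>c. good c \<and> mle (a (Suc i) k) (Bc c))" by blast
      have "mle (a (Suc i) k) (a (Suc (Suc i)) j)" using degs[of "Suc (Suc i)" j k] k Suc.prems by simp
      then show "(KS :: (('w \<Rightarrow>\<^sub>0 nat) \<Rightarrow> bool) \<Rightarrow> ('w,'k) mpoly set) (\<lambda>c. good c \<and> mle (a (Suc (Suc i)) j) (Bc c)) \<subseteq> X"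
        unfolding X by (auto simp: KS_def intro: mle_trans)
    qed
  qed
  finally show ?case .
qed

lemma beta1': "\<beta> (Suc 0) = m" using beta1 by simp
lemma lam1': "j < m \<Longrightarrow> lam (Suc 0) 0 j = 1" using lam1 by simp

lemma Lj_ideal: assumes "j < m" shows "is_ideal_in UNIV (L j)"
  unfolding L_def[OF assms] by (rule ideal_gen_ideal_UNIV)
lemma L0: "j < m \<Longrightarrow> 0 \<in> L j" using Lj_ideal unfolding is_ideal_in_def by blast
lemma Ladd: "j < m \<Longrightarrow> x \<in> L j \<Longrightarrow> y \<in> L j \<Longrightarrow> x + y \<in> L j" using Lj_ideal unfolding is_ideal_in_def by blast
lemma Lmult: "j < m \<Longrightarrow> x \<in> L j \<Longrightarrow> r * x \<in> L j" using Lj_ideal unfolding is_ideal_in_def by blast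

lemma Fstar1: "u \<in> Fstar \<beta> lam L 1 \<longleftrightarrow> (\<forall>j<m. u j \<in> L j) \<and> (\<forall>j\<ge>m. u j = 0)"
  by (simp add: Fstar_def beta1 beta1')

lemma dstar1: "dstar \<beta> lam 1 u = (\<lambda>k. if k = 0 then (\<Sum>j<m. u j) else 0)"
proof
  fix k
  show "dstar \<beta> lam 1 u k = (if k = 0 then (\<Sum>j<m. u j) else 0)"
  proof (cases "k = 0")
    case True
    have "dstar \<beta> lam 1 u k = (\<Sum>j<m. const (lam 1 0 j) * u j)"
      using True by (simp add: dstar_def beta0 beta1')
    also have "\<dots> = (\<Sum>j<m. u j)" by (rule sum.cong) (simp_all add: lam1')
    finally show ?thesis using True by simp
  qed (simp add: dstar_def beta0)
qed

lemma Fstar1S: "u \<in> Fstar \<beta> lam L (Suc 0) \<longleftrightarrow> (\<forall>j<m. u j \<in> L j) \<and> (\<forall>j\<ge>m. u j = 0)"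
  using Fstar1 by simp
lemma dstar1S: "dstar \<beta> lam (Suc 0) u = (\<lambda>k. if k = 0 then (\<Sum>j<m. u j) else 0)"
  using dstar1 by simp

lemma H0: "dstar \<beta> lam 1 ` Fstar \<beta> lam L 1 = {u. u 0 \<in> ideal_gen UNIV (\<Union>j<m. L j) \<and> (\<forall>k\<ge>1. u k = 0)}"
proof
  show "dstar \<beta> lam 1 ` Fstar \<beta> lam L 1 \<subseteq> {u. u 0 \<in> ideal_gen UNIV (\<Union>j<m. L j) \<and> (\<forall>k\<ge>1. u k = 0)}"
  proof clarify
    fix u assume u: "u \<in> Fstar \<beta> lam L 1"
    have "(\<Sum>j<m. u j) \<in> ideal_gen UNIV (\<Union>j<m. L j)"
    proof (rule ideal_sum[OF ideal_gen_ideal_UNIV])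
      fix j assume "j \<in> {..<m}"
      then have "u j \<in> L j" using u unfolding Fstar1 Fstar1S by simp
      then have "u j \<in> (\<Union>j<m. L j)" using \<open>j \<in> {..<m}\<close> by blast
      then show "u j \<in> ideal_gen UNIV (\<Union>j<m. L j)" by (rule subsetD[OF ideal_gen_sub])
    qed
    then show "dstar \<beta> lam 1 u 0 \<in> ideal_gen UNIV (\<Union>j<m. L j) \<and> (\<forall>k\<ge>1. dstar \<beta> lam 1 u k = 0)"
      by (simp add: dstar1 dstar1S)
  qed
  show "{u. u 0 \<in> ideal_gen UNIV (\<Union>j<m. L j) \<and> (\<forall>k\<ge>1. u k = 0)} \<subseteq> dstar \<beta> lam 1 ` Fstar \<beta> lam L 1"
  proof clarify
    fix x :: "nat \<Rightarrow> ('w,'k) mpoly"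
    assume x0: "x 0 \<in> ideal_gen UNIV (\<Union>j<m. L j)" and xk: "\<forall>k\<ge>1. x k = 0"
    define SS where "SS = {(\<Sum>j<m. u j) | u. \<forall>j<m. u j \<in> L j}"
    have SSI: "is_ideal_in UNIV SS"
      unfolding is_ideal_in_def
    proof (intro conjI ballI)
      show "SS \<subseteq> UNIV" by simp
      show "0 \<in> SS" unfolding SS_def
        by (intro CollectI exI[of _ "\<lambda>_. 0"]) (simp add: L0)
    next
      fix y z assume "y \<in> SS" "z \<in> SS"
      then obtain u v where "y = (\<Sum>j<m. u j)" "\<forall>j<m. u j \<in> L j" "z = (\<Sum>j<m. v j)" "\<forall>j<m. v j \<in> L j"
        unfolding SS_def by blast
      then show "y + z \<in> SS" unfolding SS_def
        by (intro CollectI exI[of _ "\<lambda>j. u j + v j"]) (simp add: Ladd sum.distrib)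
    next
      fix r y assume "y \<in> SS"
      then obtain u where "y = (\<Sum>j<m. u j)" "\<forall>j<m. u j \<in> L j"
        unfolding SS_def by blast
      then show "r * y \<in> SS" unfolding SS_def
        by (intro CollectI exI[of _ "\<lambda>j. r * u j"]) (simp add: Lmult sum_distrib_left)
    qed
    have "(\<Union>j<m. L j) \<subseteq> SS"
    proof
      fix y assume "y \<in> (\<Union>j<m. L j)"
      then obtain j0 where j0: "j0 < m" "y \<in> L j0" by blast
      have "(\<Sum>j<m. (if j = j0 then y else 0)) = y" using j0 by (simp add: sum.delta)
      moreover have "\<forall>j<m. (if j = j0 then y else 0) \<in> L j" using j0 L0 by simp
      ultimately show "y \<in> SS" unfolding SS_def by (intro CollectI exI[of _ "\<lambda>j. if j = j0 then y else 0"]) simp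
    qed
    then have "x 0 \<in> SS" using ideal_gen_least[OF SSI] x0 by blast
    then obtain u where u: "x 0 = (\<Sum>j<m. u j)" "\<forall>j<m. u j \<in> L j" unfolding SS_def by blast
    define u' where "u' = (\<lambda>j. if j < m then u j else 0)"
    have "u' \<in> Fstar \<beta> lam L 1" using u unfolding Fstar1 u'_def by simp
    moreover have "dstar \<beta> lam 1 u' = x"
    proof
      fix k show "dstar \<beta> lam 1 u' k = x k"
        using u xk by (cases "k = 0") (auto simp: dstar1 dstar1S u'_def)
    qed
    ultimately show "x \<in> dstar \<beta> lam 1 ` Fstar \<beta> lam L 1" by blast
  qed
qed

lemma FstarC: "u \<in> Fstar \<beta> lam L (Suc i) \<longleftrightarrow>
   (\<forall>j<\<beta> (Suc i). \<forall>c\<in>Poly_Mapping.keys (u j). good c \<and> mle (a (Suc i) j) (Bc c)) \<and> (\<forall>j\<ge>\<beta> (Suc i). u j = 0)"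
proof -
  have "(\<forall>j<\<beta> (Suc i). u j \<in> Lind \<beta> lam L (Suc i) j) \<longleftrightarrow>
        (\<forall>j<\<beta> (Suc i). \<forall>c\<in>Poly_Mapping.keys (u j). good c \<and> mle (a (Suc i) j) (Bc c))"
    using LindChar by (auto simp: KS_def)
  then show ?thesis by (simp add: Fstar_def)
qed

lemma lookup_dstar: "k < \<beta> (i - 1) \<Longrightarrow>
  Poly_Mapping.lookup (dstar \<beta> lam i u k) c = (\<Sum>j<\<beta> i. lam i k j * Poly_Mapping.lookup (u j) c)"
  by (simp add: dstar_def lookup_sum lookup_const_mult)

lemma dstar_out: "\<not> k < \<beta> (i - 1) \<Longrightarrow> dstar \<beta> lam i u k = 0"
  by (simp add: dstar_def)

lemma exactF:
  assumes i1: "1 \<le> i" and ip: "i \<le> p"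
  shows "{u \<in> Fstar \<beta> lam L i. dstar \<beta> lam i u = (\<lambda>_. 0)} = dstar \<beta> lam (Suc i) ` Fstar \<beta> lam L (Suc i)"
proof -
  obtain i0 where i0: "i = Suc i0" using i1 by (cases i) auto
  have Fi: "u \<in> Fstar \<beta> lam L i \<longleftrightarrow>
   (\<forall>j<\<beta> i. \<forall>c\<in>Poly_Mapping.keys (u j). good c \<and> mle (a i j) (Bc c)) \<and> (\<forall>j\<ge>\<beta> i. u j = 0)" for u
    using FstarC[of u i0] i0 by simp
  have Fsi: "U \<in> Fstar \<beta> lam L (Suc i) \<longleftrightarrow>
   (\<forall>j<\<beta> (Suc i). \<forall>c\<in>Poly_Mapping.keys (U j). good c \<and> mle (a (Suc i) j) (Bc c)) \<and> (\<forall>j\<ge>\<beta> (Suc i). U j = 0)" for U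
    using FstarC[of U i] by simp
  show ?thesis
  proof
    show "dstar \<beta> lam (Suc i) ` Fstar \<beta> lam L (Suc i) \<subseteq> {u \<in> Fstar \<beta> lam L i. dstar \<beta> lam i u = (\<lambda>_. 0)}"
    proof clarify
      fix U assume U: "U \<in> Fstar \<beta> lam L (Suc i)"
      have UU: "\<forall>j<\<beta> (Suc i). \<forall>c\<in>Poly_Mapping.keys (U j). good c \<and> mle (a (Suc i) j) (Bc c)"
        "\<forall>j\<ge>\<beta> (Suc i). U j = 0" using U unfolding Fsi by auto
      have mem: "dstar \<beta> lam (Suc i) U \<in> Fstar \<beta> lam L i"
        unfolding Fi
      proof (rule conjI; intro allI impI ballI)
        fix j c assume j: "j < \<beta> i" and c: "c \<in> Poly_Mapping.keys (dstar \<beta> lam (Suc i) U j)"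
        have "c \<in> Poly_Mapping.keys (\<Sum>j'<\<beta> (Suc i). const (lam (Suc i) j j') * U j')"
          using c j by (simp add: dstar_def)
        then obtain j' where j': "j' < \<beta> (Suc i)" and cj: "c \<in> Poly_Mapping.keys (const (lam (Suc i) j j') * U j')"
          using keys_sum[of "\<lambda>j'. const (lam (Suc i) j j') * U j'" "{..<\<beta> (Suc i)}"] by blast
        have l: "lam (Suc i) j j' \<noteq> 0" using cj by (auto simp: in_keys_iff lookup_const_mult)
        have cU: "c \<in> Poly_Mapping.keys (U j')" using cj keys_const_mult by blast
        have "mle (a i j) (a (Suc i) j')" using degs[of "Suc i" j' j] j j' l by simp
        moreover have "good c \<and> mle (a (Suc i) j') (Bc c)" using UU(1) j' cU by simp
        ultimately show "good c \<and> mle (a i j) (Bc c)" using mle_trans by blast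
      next
        fix j assume "\<beta> i \<le> j"
        then show "dstar \<beta> lam (Suc i) U j = 0" by (simp add: dstar_def)
      qed
      have zero: "dstar \<beta> lam i (dstar \<beta> lam (Suc i) U) = (\<lambda>_. 0)"
      proof
        fix k
        show "dstar \<beta> lam i (dstar \<beta> lam (Suc i) U) k = 0"
        proof (cases "k < \<beta> (i - 1)")
          case k: True
          show ?thesis
          proof (rule poly_mapping_eqI)
            fix c
            have "Poly_Mapping.lookup (dstar \<beta> lam i (dstar \<beta> lam (Suc i) U) k) c =
               (\<Sum>j<\<beta> i. lam i k j * (\<Sum>j'<\<beta> (Suc i). lam (Suc i) j j' * Poly_Mapping.lookup (U j') c))"
              using k by (simp add: lookup_dstar[OF k] lookup_dstar[of _ "Suc i"])
            also have "\<dots> = (\<Sum>j'<\<beta> (Suc i). (\<Sum>j<\<beta> i. lam i k j * lam (Suc i) j j') * Poly_Mapping.lookup (U j') c)"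
              by (simp add: sum_distrib_left sum_distrib_right mult.assoc sum.swap[of _ "{..<\<beta> i}"])
            also have "\<dots> = 0" using dd[OF i1 ip _ k] by simp
            finally show "Poly_Mapping.lookup (dstar \<beta> lam i (dstar \<beta> lam (Suc i) U) k) c = Poly_Mapping.lookup 0 c" by simp
          qed
        qed (simp add: dstar_out)
      qed
      show "dstar \<beta> lam (Suc i) U \<in> Fstar \<beta> lam L i \<and> dstar \<beta> lam i (dstar \<beta> lam (Suc i) U) = (\<lambda>_. 0)"
        using mem zero by blast
    qed
    show "{u \<in> Fstar \<beta> lam L i. dstar \<beta> lam i u = (\<lambda>_. 0)} \<subseteq> dstar \<beta> lam (Suc i) ` Fstar \<beta> lam L (Suc i)"
    proof clarify
      fix u assume u: "u \<in> Fstar \<beta> lam L i" and dz: "dstar \<beta> lam i u = (\<lambda>_. 0)"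
      have uu: "\<forall>j<\<beta> i. \<forall>c\<in>Poly_Mapping.keys (u j). good c \<and> mle (a i j) (Bc c)" "\<forall>j\<ge>\<beta> i. u j = 0"
        using u unfolding Fi by auto
      define K where "K = (\<Union>j<\<beta> i. Poly_Mapping.keys (u j))"
      have finK: "finite K" by (simp add: K_def)
      have goodK: "c \<in> K \<Longrightarrow> good c" for c using uu(1) by (auto simp: K_def)
      define vv where "vv c j = (if j < \<beta> i then Poly_Mapping.lookup (u j) c else 0)" for c j
      define PW where "PW c w \<longleftrightarrow> (\<forall>j'. w j' \<noteq> 0 \<longrightarrow> j' < \<beta> (Suc i) \<and> mle (a (Suc i) j') (Bc c)) \<and>
          (\<forall>j<\<beta> i. vv c j = (\<Sum>j'<\<beta> (Suc i). lam (Suc i) j j' * w j'))" for c w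
      have ex: "\<exists>w. PW c w" for c
        unfolding PW_def
      proof (rule strand[OF i1 ip])
        fix j assume "vv c j \<noteq> 0"
        then have "j < \<beta> i" "c \<in> Poly_Mapping.keys (u j)" by (auto simp: vv_def in_keys_iff split: if_splits)
        then show "j < \<beta> i \<and> mle (a i j) (Bc c)" using uu(1) by blast
      next
        fix k assume k: "k < \<beta> (i - 1)"
        have "(\<Sum>j<\<beta> i. lam i k j * vv c j) = Poly_Mapping.lookup (dstar \<beta> lam i u k) c"
          by (simp add: lookup_dstar[OF k] vv_def)
        then show "(\<Sum>j<\<beta> i. lam i k j * vv c j) = 0" using dz by simp
      qed
      define W where "W c = (SOME w. PW c w)" for c
      have W: "PW c (W c)" for c unfolding W_def using ex by (rule someI_ex)
      define U where "U j' = Abs_poly_mapping (\<lambda>c. if c \<in> K then W c j' else 0)" for j'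
      have lU: "Poly_Mapping.lookup (U j') c = (if c \<in> K then W c j' else 0)" for j' c
      proof -
        have "finite {c. (if c \<in> K then W c j' else 0) \<noteq> 0}"
          by (rule finite_subset[OF _ finK]) auto
        then show ?thesis by (simp add: U_def)
      qed
      have Umem: "U \<in> Fstar \<beta> lam L (Suc i)"
        unfolding Fsi
      proof (rule conjI; intro allI impI ballI)
        fix j' c assume j': "j' < \<beta> (Suc i)" and c: "c \<in> Poly_Mapping.keys (U j')"
        then have cK: "c \<in> K" and w: "W c j' \<noteq> 0" by (auto simp: in_keys_iff lU split: if_splits)
        show "good c \<and> mle (a (Suc i) j') (Bc c)" using goodK[OF cK] W[of c] w by (simp add: PW_def)
      next
        fix j' assume "\<beta> (Suc i) \<le> j'"
        show "U j' = 0"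
        proof (rule poly_mapping_eqI)
          fix c
          have "W c j' = 0" using W[of c] \<open>\<beta> (Suc i) \<le> j'\<close> unfolding PW_def by (meson not_le)
          then show "Poly_Mapping.lookup (U j') c = Poly_Mapping.lookup 0 c" by (simp add: lU)
        qed
      qed
      have "dstar \<beta> lam (Suc i) U = u"
      proof
        fix k
        show "dstar \<beta> lam (Suc i) U k = u k"
        proof (cases "k < \<beta> i")
          case k: True
          show ?thesis
          proof (rule poly_mapping_eqI)
            fix c
            have "Poly_Mapping.lookup (dstar \<beta> lam (Suc i) U k) c = (\<Sum>j'<\<beta> (Suc i). lam (Suc i) k j' * Poly_Mapping.lookup (U j') c)"
              using k lookup_dstar[of k "Suc i"] by simp
            also have "\<dots> = Poly_Mapping.lookup (u k) c"
            proof (cases "c \<in> K")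
              case True
              then show ?thesis using W[of c] k by (simp add: lU PW_def vv_def)
            next
              case False
              then have "c \<notin> Poly_Mapping.keys (u k)" using k by (auto simp: K_def)
              then show ?thesis using False by (simp add: lU in_keys_iff)
            qed
            finally show "Poly_Mapping.lookup (dstar \<beta> lam (Suc i) U k) c = Poly_Mapping.lookup (u k) c" .
          qed
        next
          case False
          then show ?thesis using uu(2) by (simp add: dstar_def)
        qed
      qed
      then show "u \<in> dstar \<beta> lam (Suc i) ` Fstar \<beta> lam L (Suc i)" using Umem by blast
    qed
  qed
qed

end

theorem theorem1p4:
  fixes I :: "('v::finite, 'k::field) mpoly set"
    and m :: nat and aS :: "nat \<Rightarrow> ('v \<Rightarrow>\<^sub>0 nat)"
    and p :: nat and \<beta> :: "nat \<Rightarrow> nat" and a :: "nat \<Rightarrow> nat \<Rightarrow> ('v \<Rightarrow>\<^sub>0 nat)"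
    and lam :: "nat \<Rightarrow> nat \<Rightarrow> nat \<Rightarrow> 'k"
    and grp :: "'w::finite \<Rightarrow> 'v"
    and Lv :: "'v \<Rightarrow> nat \<Rightarrow> ('w, 'k) mpoly set"
    and L :: "nat \<Rightarrow> ('w, 'k) mpoly set"
  assumes I_mon: "monomial_ideal_in UNIV I"
    and I_proper: "I \<noteq> UNIV"
    and G_I: "inj_on aS {..<m}" "aS ` {..<m} = mingens I"
    and res: "is_min_graded_res I p \<beta> a lam"
    and beta1: "\<beta> 1 = m"
    and a1: "\<And>j. j < m \<Longrightarrow> a 1 j = aS j"
    and lam1: "\<And>j. j < m \<Longrightarrow> lam 1 0 j = 1"
    and grp_surj: "surj grp"
    and Lv_mon: "\<And>l j. j < m \<Longrightarrow> monomial_ideal_in {w. grp w = l} (Lv l (Poly_Mapping.lookup (aS j) l))"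
    and Lv_mono: "\<And>l j k. j < m \<Longrightarrow> k < m \<Longrightarrow> Poly_Mapping.lookup (aS j) l \<ge> Poly_Mapping.lookup (aS k) l \<Longrightarrow>
                    Lv l (Poly_Mapping.lookup (aS j) l) \<subseteq> Lv l (Poly_Mapping.lookup (aS k) l)"
    and L_def: "\<And>j. j < m \<Longrightarrow> L j = ideal_gen UNIV
                    {\<Prod>l\<in>UNIV. f l | f. \<forall>l. f l \<in> Lv l (Poly_Mapping.lookup (aS j) l)}"
  shows "dstar \<beta> lam 1 ` Fstar \<beta> lam L 1 =
           {u. u 0 \<in> ideal_gen UNIV (\<Union>j<m. L j) \<and> (\<forall>k\<ge>1. u k = 0)}
       \<and> (\<forall>i. 1 \<le> i \<and> i \<le> p \<longrightarrow>
           {u \<in> Fstar \<beta> lam L i. dstar \<beta> lam i u = (\<lambda>_. 0)} = dstar \<beta> lam (Suc i) ` Fstar \<beta> lam L (Suc i))"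
proof -
  interpret full I p \<beta> a lam m aS grp Lv L
  proof (unfold_locales)
    show "is_min_graded_res I p \<beta> a lam" by (rule res)
  qed (use beta1 a1 lam1 Lv_mon Lv_mono L_def in auto)
  show ?thesis using H0 exactF by blast
qed

end
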